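(* Let $\mathcal{A}$ be an associative algebra over $\mathbb{R}$ that is finite-dimensional as a real vector space, equipped with a symmetric bilinear form $\langle\cdot,\cdot\rangle:\mathcal{A}\times\mathcal{A}\to\mathbb{R}$ satisfying $\langle a,a\rangle\ge0$ for all $a$ (possibly degenerate), and write $\|a\|^2=\langle a,a\rangle$. Let $\mu$ be a Borel probability measure on $\mathcal{A}$ such that $\mathbf{E}\,x=\int_{\mathcal{A}}x\,d\mu=0$, and such that for every non-commutative polynomial $p(x_1,\dots,x_n)=\sum_{1\le i_1,\dots,i_n\le n}\gamma_{i_1\dots i_n}x_{i_1}\cdots x_{i_n}$ with real coefficients, $\mathbf{E}\langle p(x_1,\dots,x_n),p(x_1,\dots,x_n)\rangle<+\infty$ when $x_1,\dots,x_n$ are sampled independently from $\mu$. Define $$c(n,\mu)=\mathbf{E}\|Z\|^2,\qquad Z=\frac1{n!}\sum_{\sigma\in S_n}Y_{\sigma(1)}\cdots Y_{\sigma(n)},$$ where $Y_1,\dots,Y_n$ are sampled independently from $\mu$. Given a real $n\times n$ matrix $A=(a_{ij})$ with $a_{ij}\ge0$, let $B=(b_{ij})$ be the random $n\times n$ matrix over $\mathcal{A}$ with $b_{ij}=\sqrt{a_{ij}}\,X_{ij}$, where the $X_{ij}$ are sampled independently from $\mu$. Then $$\mathbf{E}\|\operatorname{sdet}B\|^2=c(n,\mu)\operatorname{per}A.$$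
   Context: $S_n$ is the symmetric group on $\{1,\dots,n\}$. The permanent is $\operatorname{per}A=\sum_{\sigma\in S_n}\prod_{i=1}^n a_{i\sigma(i)}$. For an $n\times n$ matrix $B=(b_{ij})$ with entries in an associative algebra $\mathcal{A}$, the symmetrized determinant is $\operatorname{sdet}B=\frac1{n!}\sum_{(\sigma,\tau)\in S_n\times S_n}(\operatorname{sgn}\sigma)(\operatorname{sgn}\tau)\,b_{\sigma(1)\tau(1)}b_{\sigma(2)\tau(2)}\cdots b_{\sigma(n)\tau(n)}\in\mathcal{A}$. *)

theory Defs
  imports "HOL-Analysis.Analysis" "HOL-Probability.Probability" "HOL-Combinatorics.Permutations"
begin

text \<open>The value on the empty
  list is an arbitrary convention and is never used (n >= 1 below).\<close>
fun mprod :: "'a::semigroup_mult list \<Rightarrow> 'a::semigroup_mult" where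
  "mprod [] = undefined"
| "mprod [x] = x"
| "mprod (x # y # xs) = x * mprod (y # xs)"

definition per :: "nat \<Rightarrow> (nat \<Rightarrow> nat \<Rightarrow> real) \<Rightarrow> real" where
  "per n A = (\<Sum>\<sigma>\<in>{\<sigma>. \<sigma> permutes {..<n}}. \<Prod>i<n. A i (\<sigma> i))"

definition sdet :: "nat \<Rightarrow> (nat \<Rightarrow> nat \<Rightarrow> 'a::real_algebra) \<Rightarrow> 'a" where
  "sdet n b = (1 / fact n) *\<^sub>R
     (\<Sum>\<sigma>\<in>{\<sigma>. \<sigma> permutes {..<n}}. \<Sum>\<tau>\<in>{\<tau>. \<tau> permutes {..<n}}.
        real_of_int (sign \<sigma> * sign \<tau>) *\<^sub>R mprod (map (\<lambda>i. b (\<sigma> i) (\<tau> i)) [0..<n]))"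

definition ncpoly :: "nat \<Rightarrow> ((nat \<Rightarrow> nat) \<Rightarrow> real) \<Rightarrow> (nat \<Rightarrow> 'a::real_algebra) \<Rightarrow> 'a" where
  "ncpoly n \<gamma> x = (\<Sum>w\<in>PiE {..<n} (\<lambda>_. {..<n}). \<gamma> w *\<^sub>R mprod (map (\<lambda>k. x (w k)) [0..<n]))"

definition symZ :: "nat \<Rightarrow> (nat \<Rightarrow> 'a::real_algebra) \<Rightarrow> 'a" where
  "symZ n Y = (1 / fact n) *\<^sub>R (\<Sum>\<sigma>\<in>{\<sigma>. \<sigma> permutes {..<n}}. mprod (map (\<lambda>i. Y (\<sigma> i)) [0..<n]))"

definition cnmu :: "('a::{real_algebra, euclidean_space} \<Rightarrow> 'a \<Rightarrow> real) \<Rightarrow> nat \<Rightarrow> 'a measure \<Rightarrow> real" where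
  "cnmu Bf n \<mu> = (\<integral>Y. Bf (symZ n Y) (symZ n Y) \<partial>(PiM {..<n} (\<lambda>_. \<mu>)))"

end

theory Submission
  imports Defs
begin
lemma mprod_scale:
  "xs \<noteq> [] \<Longrightarrow> mprod (map (\<lambda>i. c i *\<^sub>R (f i :: 'a::real_algebra)) xs) = prod_list (map c xs) *\<^sub>R mprod (map f xs)"
proof (induction xs)
  case Nil then show ?case by simp
next
  case (Cons x xs)
  show ?case
  proof (cases xs)
    case Nil then show ?thesis by simp
  next
    case (Cons y ys)
    then show ?thesis using Cons.IH by (simp add: mult_scaleR_left mult_scaleR_right)
  qed
qed

lemma lin_lmul: "linear g \<Longrightarrow> linear (\<lambda>y. (c::'a::real_algebra) * g y)"
  by (auto intro!: linearI simp: linear_add linear_scale distrib_left mult_scaleR_right)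

lemma lin_scale: "linear g \<Longrightarrow> linear (\<lambda>y. c *\<^sub>R g y)"
  by (auto intro!: linearI simp: linear_add linear_scale scaleR_add_right)

lemma mprod_linear:
  fixes Y :: "'b \<Rightarrow> 'a::real_algebra"
  shows "r0 \<in> set ks \<Longrightarrow> distinct ks \<Longrightarrow> linear (\<lambda>y. mprod (map (Y(r0:=y)) ks))"
proof (induction ks)
  case Nil then show ?case by simp
next
  case (Cons k ks)
  show ?case
  proof (cases ks)
    case Nil then show ?thesis using Cons.prems by (simp add: linear_id[unfolded id_def])
  next
    case (Cons k' ks')
    show ?thesis
    proof (cases "k = r0")
      case True
      then have "r0 \<notin> set ks" using Cons.prems by auto
      then have m: "map (Y(r0:=y)) ks = map Y ks" for y by (auto intro: map_cong)
      have "mprod (map (Y(r0:=y)) (k#ks)) = (Y(r0:=y)) k * mprod (map (Y(r0:=y)) ks)" for y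
        unfolding Cons by (simp only: list.map mprod.simps)
      then have e: "mprod (map (Y(r0:=y)) (k#ks)) = y * mprod (map Y ks)" for y
        using True by (simp only: m fun_upd_same)
      show ?thesis unfolding e
        by (auto intro!: linearI simp: distrib_right mult_scaleR_left)
    next
      case False
      have l: "linear (\<lambda>y. mprod (map (Y(r0:=y)) ks))" by (rule Cons.IH) (use Cons.prems False in auto)
      have "mprod (map (Y(r0:=y)) (k#ks)) = (Y(r0:=y)) k * mprod (map (Y(r0:=y)) ks)" for y
        unfolding Cons by (simp only: list.map mprod.simps)
      also have "(Y(r0:=y)) k = Y k" for y using False by simp
      finally have e2: "mprod (map (Y(r0:=y)) (k#ks)) = Y k * mprod (map (Y(r0:=y)) ks)" for y .
      show ?thesis unfolding e2 using l by (rule lin_lmul)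
    qed
  qed
qed

lemma perm_list:
  assumes "\<sigma> permutes {..<n}" "r0 < n"
  shows "r0 \<in> set (map \<sigma> [0..<n])" "distinct (map \<sigma> [0..<n])"
proof -
  have "\<sigma> ` {..<n} = {..<n}" using assms(1) by (rule permutes_image)
  then show "r0 \<in> set (map \<sigma> [0..<n])" using assms(2) by (auto simp: atLeast0LessThan)
  show "distinct (map \<sigma> [0..<n])"
    using permutes_inj[OF assms(1)] by (simp add: distinct_map inj_on_def)
qed

lemma symZ_linear:
  fixes Y :: "nat \<Rightarrow> 'a::real_algebra"
  assumes "r0 < n"
  shows "linear (\<lambda>y. symZ n (Y(r0:=y)))"
proof -
  let ?P = "{\<sigma>. \<sigma> permutes {..<n}}"
  have l: "linear (\<lambda>y. mprod (map (\<lambda>i. (Y(r0:=y)) (\<sigma> i)) [0..<n]))" if "\<sigma> \<in> ?P" for \<sigma>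
  proof -
    have "linear (\<lambda>y. mprod (map (Y(r0:=y)) (map \<sigma> [0..<n])))"
      using perm_list[of \<sigma> n r0] that assms by (intro mprod_linear) auto
    then show ?thesis by (simp only: map_map o_def)
  qed
  have l2: "linear (\<lambda>y. \<Sum>\<sigma>\<in>?P. mprod (map (\<lambda>i. (Y(r0:=y)) (\<sigma> i)) [0..<n]))"
    using l by (intro linear_compose_sum) auto
  show ?thesis unfolding symZ_def
    by (rule lin_scale[OF l2])
qed

lemma sdet_decomp:
  fixes X :: "nat \<Rightarrow> nat \<Rightarrow> 'a::real_algebra"
  assumes n: "n \<ge> 1"
  shows "sdet n (\<lambda>i j. s i j *\<^sub>R X i j) =
    (\<Sum>\<pi>\<in>{\<pi>. \<pi> permutes {..<n}}. (real_of_int (sign \<pi>) * (\<Prod>r<n. s r (\<pi> r))) *\<^sub>R symZ n (\<lambda>r. X r (\<pi> r)))"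
proof -
  let ?P = "{\<pi>. \<pi> permutes {..<n}}"
  let ?m = "\<lambda>\<sigma> \<tau>. mprod (map (\<lambda>i. X (\<sigma> i) (\<tau> i)) [0..<n])"
  have ne: "[0..<n] \<noteq> []" using n by simp
  have pl: "prod_list (map c [0..<n]) = (\<Prod>i<n. c i)" for c :: "nat \<Rightarrow> real"
    using prod.distinct_set_conv_list[of "[0..<n]" c] by (simp add: atLeast0LessThan)
  have t1: "mprod (map (\<lambda>i. s (\<sigma> i) (\<tau> i) *\<^sub>R X (\<sigma> i) (\<tau> i)) [0..<n])
      = (\<Prod>i<n. s (\<sigma> i) (\<tau> i)) *\<^sub>R ?m \<sigma> \<tau>" for \<sigma> \<tau>
    using mprod_scale[OF ne, of "\<lambda>i. s (\<sigma> i) (\<tau> i)" "\<lambda>i. X (\<sigma> i) (\<tau> i)"] pl by simp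
  have t2: "(\<Sum>\<tau>\<in>?P. real_of_int (sign \<sigma> * sign \<tau>) *\<^sub>R ((\<Prod>i<n. s (\<sigma> i) (\<tau> i)) *\<^sub>R ?m \<sigma> \<tau>))
      = (\<Sum>\<pi>\<in>?P. (real_of_int (sign \<pi>) * (\<Prod>r<n. s r (\<pi> r))) *\<^sub>R ?m \<sigma> (\<pi> \<circ> \<sigma>))"
    if \<sigma>: "\<sigma> \<in> ?P" for \<sigma>
  proof -
    have "(\<Sum>\<tau>\<in>?P. real_of_int (sign \<sigma> * sign \<tau>) *\<^sub>R ((\<Prod>i<n. s (\<sigma> i) (\<tau> i)) *\<^sub>R ?m \<sigma> \<tau>))
      = (\<Sum>\<pi>\<in>?P. real_of_int (sign \<sigma> * sign (\<pi> \<circ> \<sigma>)) *\<^sub>R ((\<Prod>i<n. s (\<sigma> i) ((\<pi> \<circ> \<sigma>) i)) *\<^sub>R ?m \<sigma> (\<pi> \<circ> \<sigma>)))"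
      using \<sigma> by (intro sum_permutations_compose_right) auto
    also have "\<dots> = (\<Sum>\<pi>\<in>?P. (real_of_int (sign \<pi>) * (\<Prod>r<n. s r (\<pi> r))) *\<^sub>R ?m \<sigma> (\<pi> \<circ> \<sigma>))"
    proof (rule sum.cong[OF refl])
      fix \<pi> assume \<pi>: "\<pi> \<in> ?P"
      have sg: "sign \<sigma> * sign (\<pi> \<circ> \<sigma>) = sign \<pi>"
      proof -
        have "permutation \<pi>" "permutation \<sigma>" using \<pi> \<sigma> permutation_permutes by auto
        then have "sign (\<pi> \<circ> \<sigma>) = sign \<sigma> * sign \<pi>" by (simp add: sign_compose mult.commute)
        then show ?thesis by simp
      qed
      have pr: "(\<Prod>i<n. s (\<sigma> i) ((\<pi> \<circ> \<sigma>) i)) = (\<Prod>r<n. s r (\<pi> r))"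
        using prod.permute[of \<sigma> "{..<n}" "\<lambda>r. s r (\<pi> r)"] \<sigma> by (simp add: o_def)
      show "real_of_int (sign \<sigma> * sign (\<pi> \<circ> \<sigma>)) *\<^sub>R ((\<Prod>i<n. s (\<sigma> i) ((\<pi> \<circ> \<sigma>) i)) *\<^sub>R ?m \<sigma> (\<pi> \<circ> \<sigma>))
        = (real_of_int (sign \<pi>) * (\<Prod>r<n. s r (\<pi> r))) *\<^sub>R ?m \<sigma> (\<pi> \<circ> \<sigma>)"
        by (simp only: sg pr scaleR_scaleR)
    qed
    finally show ?thesis .
  qed
  have "sdet n (\<lambda>i j. s i j *\<^sub>R X i j) = (1 / fact n) *\<^sub>R (\<Sum>\<sigma>\<in>?P. \<Sum>\<tau>\<in>?P.
        real_of_int (sign \<sigma> * sign \<tau>) *\<^sub>R ((\<Prod>i<n. s (\<sigma> i) (\<tau> i)) *\<^sub>R ?m \<sigma> \<tau>))"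
    unfolding sdet_def by (simp only: t1)
  also have "\<dots> = (1 / fact n) *\<^sub>R (\<Sum>\<sigma>\<in>?P. \<Sum>\<pi>\<in>?P.
        (real_of_int (sign \<pi>) * (\<Prod>r<n. s r (\<pi> r))) *\<^sub>R ?m \<sigma> (\<pi> \<circ> \<sigma>))"
    using t2 by simp
  also have "\<dots> = (1 / fact n) *\<^sub>R (\<Sum>\<pi>\<in>?P. \<Sum>\<sigma>\<in>?P.
        (real_of_int (sign \<pi>) * (\<Prod>r<n. s r (\<pi> r))) *\<^sub>R ?m \<sigma> (\<pi> \<circ> \<sigma>))"
    by (subst sum.swap) (rule refl)
  also have "\<dots> = (\<Sum>\<pi>\<in>?P. (real_of_int (sign \<pi>) * (\<Prod>r<n. s r (\<pi> r))) *\<^sub>R symZ n (\<lambda>r. X r (\<pi> r)))"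
    unfolding symZ_def scaleR_sum_right scaleR_scaleR o_def
    by (intro sum.cong refl) (simp add: mult.commute)
  finally show ?thesis .
qed

lemma bilinear_mult: "bilinear ((*) :: 'a::{real_algebra,euclidean_space} \<Rightarrow> 'a \<Rightarrow> 'a)"
  unfolding bilinear_def
  by (auto intro!: linearI simp: distrib_left distrib_right mult_scaleR_left mult_scaleR_right)

lemma meas_bilin:
  fixes h :: "'a::euclidean_space \<Rightarrow> 'b::euclidean_space \<Rightarrow> 'c::euclidean_space"
  assumes "bilinear h" "f \<in> borel_measurable K" "g \<in> borel_measurable K"
  shows "(\<lambda>x. h (f x) (g x)) \<in> borel_measurable K"
proof -
  have bb: "bounded_bilinear h" using assms(1) bilinear_conv_bounded_bilinear by blast
  have "continuous_on UNIV (\<lambda>p. h (fst p) (snd p))"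
    by (rule bounded_bilinear.continuous_on[OF bb continuous_on_fst continuous_on_snd])
      (auto intro: continuous_on_id)
  then show ?thesis using assms(2,3) by (rule borel_measurable_continuous_Pair[rotated 2])
qed

lemma meas_mprod:
  fixes f :: "'x \<Rightarrow> 'k \<Rightarrow> 'a::{real_algebra,euclidean_space}"
  shows "(\<And>k. k \<in> set ks \<Longrightarrow> (\<lambda>x. f x k) \<in> borel_measurable K) \<Longrightarrow> (\<lambda>x. mprod (map (f x) ks)) \<in> borel_measurable K"
proof (induction ks)
  case Nil then show ?case by simp
next
  case (Cons k ks)
  show ?case
  proof (cases ks)
    case Nil then show ?thesis using Cons.prems by simp
  next
    case (Cons k' ks')
    have "(\<lambda>x. f x k * mprod (map (f x) ks)) \<in> borel_measurable K"
      using Cons.IH Cons.prems by (intro meas_bilin[OF bilinear_mult]) auto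
    then show ?thesis using Cons by simp
  qed
qed

lemma meas_symZ:
  fixes Y :: "'x \<Rightarrow> nat \<Rightarrow> 'a::{real_algebra,euclidean_space}"
  assumes "\<And>r. r < n \<Longrightarrow> (\<lambda>x. Y x r) \<in> borel_measurable K"
  shows "(\<lambda>x. symZ n (Y x)) \<in> borel_measurable K"
  unfolding symZ_def
proof (intro borel_measurable_scaleR borel_measurable_const borel_measurable_sum)
  fix \<sigma> assume "\<sigma> \<in> {\<sigma>. \<sigma> permutes {..<n}}"
  then have "i < n \<Longrightarrow> \<sigma> i < n" for i using permutes_in_image[of \<sigma> "{..<n}" i] by auto
  then show "(\<lambda>x. mprod (map (\<lambda>i. Y x (\<sigma> i)) [0..<n])) \<in> borel_measurable K"
    using meas_mprod[of "[0..<n]" "\<lambda>x i. Y x (\<sigma> i)" K] assms by auto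
qed

lemma symZ_cong: "(\<And>r. r < n \<Longrightarrow> Y r = Y' r) \<Longrightarrow> symZ n Y = symZ n Y'"
proof -
  assume h: "\<And>r. r < n \<Longrightarrow> Y r = Y' r"
  have "mprod (map (\<lambda>i. Y (\<sigma> i)) [0..<n]) = mprod (map (\<lambda>i. Y' (\<sigma> i)) [0..<n])"
    if "\<sigma> permutes {..<n}" for \<sigma>
  proof -
    have "i < n \<Longrightarrow> \<sigma> i < n" for i using permutes_in_image[OF that, of i] by auto
    then have "map (\<lambda>i. Y (\<sigma> i)) [0..<n] = map (\<lambda>i. Y' (\<sigma> i)) [0..<n]" using h by auto
    then show ?thesis by (rule arg_cong)
  qed
  then show ?thesis unfolding symZ_def by (intro arg_cong[where f="\<lambda>x. _ *\<^sub>R x"] sum.cong) auto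
qed

lemma ncpoly_symZ:
  "ncpoly n (\<lambda>w. if w \<in> (\<lambda>\<sigma>. restrict \<sigma> {..<n}) ` {\<sigma>. \<sigma> permutes {..<n}} then 1 / fact n else 0) Y = symZ n Y"
proof -
  let ?P = "{\<sigma>. \<sigma> permutes {..<n}}"
  let ?R = "(\<lambda>\<sigma>. restrict \<sigma> {..<n}) ` ?P"
  let ?E = "PiE {..<n} (\<lambda>_. {..<n})"
  let ?m = "\<lambda>w. mprod (map (\<lambda>k. Y (w k)) [0..<n])"
  have sub: "?R \<subseteq> ?E" using permutes_in_image by fastforce
  have inj: "inj_on (\<lambda>\<sigma>. restrict \<sigma> {..<n}) ?P"
  proof (rule inj_onI)
    fix \<sigma> \<tau> assume s: "\<sigma> \<in> ?P" "\<tau> \<in> ?P" "restrict \<sigma> {..<n} = restrict \<tau> {..<n}"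
    show "\<sigma> = \<tau>"
    proof
      fix x show "\<sigma> x = \<tau> x"
      proof (cases "x < n")
        case True then show ?thesis using fun_cong[OF s(3), of x] by simp
      next
        case False then show ?thesis
          using permutes_not_in[OF s(1)[simplified], of x] permutes_not_in[OF s(2)[simplified], of x] by simp
      qed
    qed
  qed
  have "ncpoly n (\<lambda>w. if w \<in> ?R then 1 / fact n else 0) Y
      = (\<Sum>w\<in>?E. if w \<in> ?R then (1 / fact n) *\<^sub>R ?m w else 0)"
    unfolding ncpoly_def by (intro sum.cong) auto
  also have "\<dots> = (\<Sum>w\<in>?E \<inter> ?R. (1 / fact n) *\<^sub>R ?m w)"
    by (rule sum.inter_restrict[symmetric]) (simp add: finite_PiE)
  also have "?E \<inter> ?R = ?R" using sub by blast
  also have "(\<Sum>w\<in>?R. (1 / fact n) *\<^sub>R ?m w) = (\<Sum>\<sigma>\<in>?P. (1 / fact n) *\<^sub>R ?m (restrict \<sigma> {..<n}))"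
    using inj by (rule sum.reindex[unfolded o_def])
  also have "\<dots> = (\<Sum>\<sigma>\<in>?P. (1 / fact n) *\<^sub>R mprod (map (\<lambda>i. Y (\<sigma> i)) [0..<n]))"
  proof (intro sum.cong refl)
    fix \<sigma> show "(1 / fact n) *\<^sub>R ?m (restrict \<sigma> {..<n}) = (1 / fact n) *\<^sub>R mprod (map (\<lambda>i. Y (\<sigma> i)) [0..<n])"
    proof -
      have "map (\<lambda>k. Y (restrict \<sigma> {..<n} k)) [0..<n] = map (\<lambda>i. Y (\<sigma> i)) [0..<n]" by auto
      then show ?thesis by (rule arg_cong)
    qed
  qed
  also have "\<dots> = symZ n Y" unfolding symZ_def scaleR_sum_right ..
  finally show ?thesis .
qed

lemma bf_cs:
  fixes Bf :: "'a::real_vector \<Rightarrow> 'a \<Rightarrow> real"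
  assumes bil: "bilinear Bf" and sym: "\<And>a b. Bf a b = Bf b a" and psd: "\<And>a. Bf a a \<ge> 0"
  shows "\<bar>Bf a b\<bar> \<le> Bf a a + Bf b b"
proof -
  have "Bf (a + b) (a + b) = Bf a a + 2 * Bf a b + Bf b b"
    using sym[of b a] by (simp add: bilinear_ladd[OF bil] bilinear_radd[OF bil])
  moreover have "Bf (a - b) (a - b) = Bf a a - 2 * Bf a b + Bf b b"
    using sym[of b a] by (simp add: bilinear_lsub[OF bil] bilinear_rsub[OF bil])
  ultimately show ?thesis using psd[of "a+b"] psd[of "a-b"] psd[of a] psd[of b] by linarith
qed

theorem theorem4p3:
  fixes Bf :: "'a::{real_algebra, euclidean_space} \<Rightarrow> 'a \<Rightarrow> real"
    and \<mu> :: "'a measure"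
    and n :: nat
    and A :: "nat \<Rightarrow> nat \<Rightarrow> real"
  assumes bil: "bilinear Bf"
    and sym: "\<And>a b. Bf a b = Bf b a"
    and psd: "\<And>a. Bf a a \<ge> 0"
    and prob: "prob_space \<mu>"
    and borel: "sets \<mu> = sets borel"
    and mean_int: "integrable \<mu> (\<lambda>x. x)"
    and mean0: "(\<integral>x. x \<partial>\<mu>) = 0"
    and moments: "\<And>\<gamma>. (\<integral>\<^sup>+ x. ennreal (Bf (ncpoly n \<gamma> x) (ncpoly n \<gamma> x))
                        \<partial>(PiM {..<n} (\<lambda>_. \<mu>))) < \<infinity>"
    and n_pos: "n \<ge> 1"
    and A_nonneg: "\<And>i j. i < n \<Longrightarrow> j < n \<Longrightarrow> A i j \<ge> 0"
  shows "(\<integral>X. Bf (sdet n (\<lambda>i j. sqrt (A i j) *\<^sub>R X (i, j)))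
                  (sdet n (\<lambda>i j. sqrt (A i j) *\<^sub>R X (i, j)))
            \<partial>(PiM ({..<n} \<times> {..<n}) (\<lambda>_. \<mu>)))
         = cnmu Bf n \<mu> * per n A"
proof -
  interpret \<mu>: prob_space \<mu> by (rule prob)
  interpret PS: product_sigma_finite "\<lambda>_::nat\<times>nat. \<mu>"
    by (simp add: product_sigma_finite_def prob_space_imp_sigma_finite prob)
  let ?P = "{\<pi>. \<pi> permutes {..<n}}"
  let ?M = "PiM ({..<n} \<times> {..<n}) (\<lambda>_. \<mu>)"
  let ?N = "PiM {..<n} (\<lambda>_. \<mu>)"
  define Z where "Z \<pi> X = symZ n (\<lambda>r. X (r, \<pi> r))" for \<pi> and X :: "nat\<times>nat \<Rightarrow> 'a"
  define c where "c \<pi> = real_of_int (sign \<pi>) * (\<Prod>r<n. sqrt (A r (\<pi> r)))" for \<pi> :: "nat \<Rightarrow> nat"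
  have pin: "\<pi> \<in> ?P \<Longrightarrow> r < n \<Longrightarrow> \<pi> r < n" for \<pi> r using permutes_in_image[of \<pi> "{..<n}" r] by auto
  have mb: "measurable K \<mu> = borel_measurable K" for K :: "'z measure"
    by (rule measurable_cong_sets[OF refl borel])
  have comp: "(\<lambda>X. X (i,j)) \<in> borel_measurable ?M" if "i < n" "j < n" for i j
  proof -
    have "(\<lambda>X. X (i,j)) \<in> measurable ?M \<mu>"
      using measurable_component_singleton[of "(i,j)" "{..<n}\<times>{..<n}" "\<lambda>_. \<mu>"] that by simp
    then show ?thesis unfolding mb .
  qed
  have compN: "(\<lambda>Y. Y r) \<in> borel_measurable ?N" if "r < n" for r
  proof -
    have "(\<lambda>Y. Y r) \<in> measurable ?N \<mu>"
      using measurable_component_singleton[of r "{..<n}" "\<lambda>_. \<mu>"] that by simp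
    then show ?thesis unfolding mb .
  qed
  have measZ: "(\<lambda>X. Z \<pi> X) \<in> borel_measurable ?M" if "\<pi> \<in> ?P" for \<pi>
    unfolding Z_def by (rule meas_symZ) (use comp pin that in auto)
  have measF: "(\<lambda>X. Bf (Z \<pi> X) (Z \<pi>' X)) \<in> borel_measurable ?M" if "\<pi> \<in> ?P" "\<pi>' \<in> ?P" for \<pi> \<pi>'
    by (intro meas_bilin[OF bil] measZ that)
  have measG: "(\<lambda>Y. Bf (symZ n Y) (symZ n Y)) \<in> borel_measurable ?N"
    by (intro meas_bilin[OF bil] meas_symZ compN)
  let ?g0 = "\<lambda>w. if w \<in> (\<lambda>\<sigma>. restrict \<sigma> {..<n}) ` ?P then 1 / fact n else (0::real)"
  have intG: "integrable ?N (\<lambda>Y. Bf (symZ n Y) (symZ n Y))"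
  proof (rule integrableI_bounded[OF measG])
    have "(\<integral>\<^sup>+Y. ennreal (norm (Bf (symZ n Y) (symZ n Y))) \<partial>?N)
        = (\<integral>\<^sup>+Y. ennreal (Bf (ncpoly n ?g0 Y) (ncpoly n ?g0 Y)) \<partial>?N)"
      using psd by (simp add: ncpoly_symZ)
    then show "(\<integral>\<^sup>+Y. ennreal (norm (Bf (symZ n Y) (symZ n Y))) \<partial>?N) < \<infinity>"
      using moments[of ?g0] by simp
  qed
  have hmeas: "(\<lambda>X. \<lambda>r\<in>{..<n}. X (r, \<pi> r)) \<in> measurable ?M ?N" if "\<pi> \<in> ?P" for \<pi>
    by (rule measurable_restrict) (use measurable_component_singleton pin that in auto)
  have distrN: "distr ?M ?N (\<lambda>X. \<lambda>r\<in>{..<n}. X (r, \<pi> r)) = ?N" if "\<pi> \<in> ?P" for \<pi>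
    using distr_PiM_reindex[of "{..<n}\<times>{..<n}" "\<lambda>_. \<mu>" "\<lambda>r. (r, \<pi> r)" "{..<n}"] prob pin[OF that]
    by (auto simp: inj_on_def)
  have Zr: "Z \<pi> X = symZ n (\<lambda>r\<in>{..<n}. X (r, \<pi> r))" for \<pi> X
    unfolding Z_def by (rule symZ_cong) simp
  have intD: "integrable ?M (\<lambda>X. Bf (Z \<pi> X) (Z \<pi> X))" if "\<pi> \<in> ?P" for \<pi>
    using integrable_distr_eq[OF hmeas[OF that] measG] distrN[OF that] intG unfolding Zr by simp
  have intDval: "integral\<^sup>L ?M (\<lambda>X. Bf (Z \<pi> X) (Z \<pi> X)) = cnmu Bf n \<mu>" if "\<pi> \<in> ?P" for \<pi>
    using integral_distr[OF hmeas[OF that] measG] distrN[OF that] unfolding cnmu_def Zr by simp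
  have intF: "integrable ?M (\<lambda>X. Bf (Z \<pi> X) (Z \<pi>' X))" if "\<pi> \<in> ?P" "\<pi>' \<in> ?P" for \<pi> \<pi>'
  proof (rule Bochner_Integration.integrable_bound[OF Bochner_Integration.integrable_add[OF intD[OF that(1)] intD[OF that(2)]] measF[OF that]])
    show "AE X in ?M. norm (Bf (Z \<pi> X) (Z \<pi>' X)) \<le> norm (Bf (Z \<pi> X) (Z \<pi> X) + Bf (Z \<pi>' X) (Z \<pi>' X))"
      using bf_cs[OF bil sym psd] psd by (intro AE_I2) (smt (verit) real_norm_def)
  qed
  have off: "integral\<^sup>L ?M (\<lambda>X. Bf (Z \<pi> X) (Z \<pi>' X)) = 0"
    if "\<pi> \<in> ?P" "\<pi>' \<in> ?P" "\<pi> \<noteq> \<pi>'" for \<pi> \<pi>'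
  proof -
    obtain r0 where r0: "r0 < n" "\<pi> r0 \<noteq> \<pi>' r0"
    proof (rule ccontr)
      assume "\<not> thesis"
      then have h: "r < n \<Longrightarrow> \<pi> r = \<pi>' r" for r using that by blast
      have "\<pi> = \<pi>'"
      proof
        fix x show "\<pi> x = \<pi>' x"
        proof (cases "x < n")
          case True then show ?thesis using h by simp
        next
          case False then show ?thesis
            using permutes_not_in[of \<pi> "{..<n}" x] permutes_not_in[of \<pi>' "{..<n}" x] \<open>\<pi> \<in> ?P\<close> \<open>\<pi>' \<in> ?P\<close> by simp
        qed
      qed
      then show False using \<open>\<pi> \<noteq> \<pi>'\<close> by simp
    qed
    define e where "e = (r0, \<pi> r0)"
    define J where "J = {..<n} \<times> {..<n} - {e}"
    have eJ: "insert e J = {..<n} \<times> {..<n}" using r0 pin[OF that(1)] unfolding e_def J_def by auto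
    have fJ: "finite J" "e \<notin> J" unfolding J_def by auto
    let ?F = "\<lambda>X. Bf (Z \<pi> X) (Z \<pi>' X)"
    have "integral\<^sup>L ?M ?F = integral\<^sup>L (PiM (insert e J) (\<lambda>_. \<mu>)) ?F" unfolding eJ ..
    also have "\<dots> = (\<integral>x. (\<integral>y. ?F (x(e:=y)) \<partial>\<mu>) \<partial>PiM J (\<lambda>_. \<mu>))"
      using PS.product_integral_insert[OF fJ, of ?F] intF[OF that(1,2)] unfolding eJ by simp
    also have "\<dots> = (\<integral>x. 0 \<partial>PiM J (\<lambda>_. \<mu>))"
    proof (intro Bochner_Integration.integral_cong refl)
      fix x :: "nat \<times> nat \<Rightarrow> 'a"
      let ?Y = "\<lambda>r. x (r, \<pi> r)"
      let ?C = "Z \<pi>' x"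
      have e1: "(\<lambda>r. (x(e:=y)) (r, \<pi> r)) = ?Y(r0:=y)" for y
        unfolding e_def by (auto simp: fun_eq_iff)
      have e2: "(\<lambda>r. (x(e:=y)) (r, \<pi>' r)) = (\<lambda>r. x (r, \<pi>' r))" for y
        unfolding e_def using r0(2) by (auto simp: fun_eq_iff)
      have Fe: "?F (x(e:=y)) = Bf (symZ n (?Y(r0:=y))) ?C" for y
        unfolding Z_def e1 e2 ..
      have l1: "linear (\<lambda>y. symZ n (?Y(r0:=y)))" by (rule symZ_linear[OF r0(1)])
      have l2: "linear (\<lambda>a. Bf a ?C)" using bil by (simp add: bilinear_def)
      have "linear ((\<lambda>a. Bf a ?C) \<circ> (\<lambda>y. symZ n (?Y(r0:=y))))" by (rule linear_compose[OF l1 l2])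
      then have bl: "bounded_linear (\<lambda>y. Bf (symZ n (?Y(r0:=y))) ?C)"
        by (simp add: o_def linear_conv_bounded_linear)
      have "(\<integral>y. Bf (symZ n (?Y(r0:=y))) ?C \<partial>\<mu>) = Bf (symZ n (?Y(r0:=(\<integral>y. y \<partial>\<mu>)))) ?C"
        by (rule integral_bounded_linear[OF bl mean_int])
      also have "\<dots> = 0" unfolding mean0
        using linear_0[OF \<open>linear ((\<lambda>a. Bf a ?C) \<circ> (\<lambda>y. symZ n (?Y(r0:=y))))\<close>] by (simp add: o_def)
      finally show "(\<integral>y. ?F (x(e:=y)) \<partial>\<mu>) = 0" unfolding Fe .
    qed
    also have "\<dots> = 0" by simp
    finally show ?thesis .
  qed
  have decomp: "sdet n (\<lambda>i j. sqrt (A i j) *\<^sub>R X (i, j)) = (\<Sum>\<pi>\<in>?P. c \<pi> *\<^sub>R Z \<pi> X)" for X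
    using sdet_decomp[OF n_pos, of "\<lambda>i j. sqrt (A i j)" "\<lambda>i j. X (i,j)"] unfolding Z_def c_def .
  have expand: "Bf (\<Sum>\<pi>\<in>?P. c \<pi> *\<^sub>R Z \<pi> X) (\<Sum>\<pi>\<in>?P. c \<pi> *\<^sub>R Z \<pi> X)
      = (\<Sum>\<pi>\<in>?P. \<Sum>\<pi>'\<in>?P. c \<pi> * c \<pi>' * Bf (Z \<pi> X) (Z \<pi>' X))" for X
    unfolding bilinear_sum[OF bil] sum.cartesian_product
    by (auto intro!: sum.cong simp: bilinear_lmul[OF bil] bilinear_rmul[OF bil] mult_ac)
  have cc: "c \<pi> * c \<pi> = (\<Prod>r<n. A r (\<pi> r))" if "\<pi> \<in> ?P" for \<pi>
  proof -
    have "real_of_int (sign \<pi>) * real_of_int (sign \<pi>) = 1"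
      by (metis of_int_1 of_int_mult sign_idempotent)
    moreover have "(\<Prod>r<n. sqrt (A r (\<pi> r))) * (\<Prod>r<n. sqrt (A r (\<pi> r))) = (\<Prod>r<n. A r (\<pi> r))"
      unfolding prod.distrib[symmetric] using A_nonneg pin[OF that] by (intro prod.cong) auto
    ultimately show ?thesis unfolding c_def by (simp add: algebra_simps)
  qed
  have "(\<integral>X. Bf (sdet n (\<lambda>i j. sqrt (A i j) *\<^sub>R X (i, j))) (sdet n (\<lambda>i j. sqrt (A i j) *\<^sub>R X (i, j))) \<partial>?M)
      = (\<integral>X. (\<Sum>\<pi>\<in>?P. \<Sum>\<pi>'\<in>?P. c \<pi> * c \<pi>' * Bf (Z \<pi> X) (Z \<pi>' X)) \<partial>?M)"
    unfolding decomp expand ..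
  also have "\<dots> = (\<Sum>\<pi>\<in>?P. \<Sum>\<pi>'\<in>?P. c \<pi> * c \<pi>' * integral\<^sup>L ?M (\<lambda>X. Bf (Z \<pi> X) (Z \<pi>' X)))"
  proof -
    have ii: "integrable ?M (\<lambda>X. c \<pi> * c \<pi>' * Bf (Z \<pi> X) (Z \<pi>' X))" if "\<pi> \<in> ?P" "\<pi>' \<in> ?P" for \<pi> \<pi>'
      using intF[OF that] by (rule Bochner_Integration.integrable_mult_right)
    have "(\<integral>X. (\<Sum>\<pi>\<in>?P. \<Sum>\<pi>'\<in>?P. c \<pi> * c \<pi>' * Bf (Z \<pi> X) (Z \<pi>' X)) \<partial>?M)
        = (\<Sum>\<pi>\<in>?P. (\<integral>X. (\<Sum>\<pi>'\<in>?P. c \<pi> * c \<pi>' * Bf (Z \<pi> X) (Z \<pi>' X)) \<partial>?M))"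
      by (intro Bochner_Integration.integral_sum Bochner_Integration.integrable_sum ii)
    also have "\<dots> = (\<Sum>\<pi>\<in>?P. \<Sum>\<pi>'\<in>?P. (\<integral>X. c \<pi> * c \<pi>' * Bf (Z \<pi> X) (Z \<pi>' X) \<partial>?M))"
      by (intro sum.cong refl Bochner_Integration.integral_sum ii)
    also have "\<dots> = (\<Sum>\<pi>\<in>?P. \<Sum>\<pi>'\<in>?P. c \<pi> * c \<pi>' * integral\<^sup>L ?M (\<lambda>X. Bf (Z \<pi> X) (Z \<pi>' X)))"
      by simp
    finally show ?thesis .
  qed
  also have "\<dots> = (\<Sum>\<pi>\<in>?P. \<Sum>\<pi>'\<in>?P. if \<pi> = \<pi>' then c \<pi> * c \<pi> * cnmu Bf n \<mu> else 0)"
    using off intDval by (intro sum.cong refl) auto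
  also have "\<dots> = (\<Sum>\<pi>\<in>?P. c \<pi> * c \<pi> * cnmu Bf n \<mu>)"
    using finite_permutations[OF finite_lessThan[of n]]
    by (intro sum.cong refl) (simp add: sum.delta sum.delta')
  also have "\<dots> = cnmu Bf n \<mu> * per n A"
    unfolding per_def sum_distrib_left using cc by (intro sum.cong refl) (simp add: mult.commute)
  finally show ?thesis .
qed
end
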